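(* Let $K=\langle g,\gamma\rangle$ be a non-trivial torsion-free group, and suppose that for every nonzero $n\in\mathbb{Z}$ we have $\gamma^n\notin\langle\langle g\rangle\rangle_K$. Then there is a finitely generated torsion-free group $\Gamma$ and a non-trivial element $a\in\Gamma$ such that: (1) $K$ embeds as a subgroup of $\Gamma$ (identify $g,\gamma$ with their images); (2) the commutator $[a,\gamma]$ is non-trivial and centralizes $g$; (3) $[a,g]=1$.
   Context: $\langle\langle g\rangle\rangle_K$ denotes the normal closure of $g$ in $K$; $[x,y]$ denotes the group commutator. *)

theory Defs
  imports "HOL-Algebra.Algebra"
begin

definition commutator :: "('a, 'b) monoid_scheme \<Rightarrow> 'a \<Rightarrow> 'a \<Rightarrow> 'a" where
  "commutator G x y = inv\<^bsub>G\<^esub> x \<otimes>\<^bsub>G\<^esub> inv\<^bsub>G\<^esub> y \<otimes>\<^bsub>G\<^esub> x \<otimes>\<^bsub>G\<^esub> y"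

definition normal_closure :: "('a, 'b) monoid_scheme \<Rightarrow> 'a set \<Rightarrow> 'a set" where
  "normal_closure G S =
     generate G (\<Union>h \<in> carrier G. \<Union>s \<in> S. {h \<otimes>\<^bsub>G\<^esub> s \<otimes>\<^bsub>G\<^esub> inv\<^bsub>G\<^esub> h})"

definition torsion_free :: "('a, 'b) monoid_scheme \<Rightarrow> bool" where
  "torsion_free G \<longleftrightarrow>
     (\<forall>x \<in> carrier G. \<forall>n::nat. n > 0 \<and> x [^]\<^bsub>G\<^esub> n = \<one>\<^bsub>G\<^esub> \<longrightarrow> x = \<one>\<^bsub>G\<^esub>)"

definition finitely_generated :: "('a, 'b) monoid_scheme \<Rightarrow> bool" where
  "finitely_generated G \<longleftrightarrow>
     (\<exists>S. finite S \<and> S \<subseteq> carrier G \<and> generate G S = carrier G)"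

end

theory Submission
  imports Defs
begin


definition sdp :: "('a,'b) monoid_scheme \<Rightarrow> ('a \<Rightarrow> int) \<Rightarrow> (int \<times> 'a) monoid" where
 "sdp K s = \<lparr>carrier = UNIV \<times> carrier K,
    monoid.mult = (\<lambda>x y. (fst x + s (snd x) * fst y, snd x \<otimes>\<^bsub>K\<^esub> snd y)),
    monoid.one = (0, \<one>\<^bsub>K\<^esub>)\<rparr>"

locale sdp_ctx = group K for K (structure) +
  fixes s :: "'a \<Rightarrow> int"
  assumes s_mult: "x \<in> carrier K \<Longrightarrow> y \<in> carrier K \<Longrightarrow> s (x \<otimes> y) = s x * s y"
    and s_pm: "x \<in> carrier K \<Longrightarrow> s x = 1 \<or> s x = -1"
begin

lemma s_one: "s \<one> = 1"
  using s_mult[of \<one> \<one>] s_pm[of \<one>] by auto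

lemma s_inv: "x \<in> carrier K \<Longrightarrow> s (inv x) = s x"
  using s_mult[of x "inv x"] s_pm[of x] s_pm[of "inv x"] s_one by auto

lemma s_sq: "x \<in> carrier K \<Longrightarrow> s x * s x = 1"
  using s_pm[of x] by auto

lemma sdp_carrier[simp]: "carrier (sdp K s) = UNIV \<times> carrier K"
  by (simp add: sdp_def)
lemma sdp_mult[simp]: "(m, x) \<otimes>\<^bsub>sdp K s\<^esub> (n, y) = (m + s x * n, x \<otimes> y)"
  by (simp add: sdp_def)
lemma sdp_one[simp]: "\<one>\<^bsub>sdp K s\<^esub> = (0, \<one>)"
  by (simp add: sdp_def)

lemma sdp_group: "group (sdp K s)"
proof (rule groupI)
  fix x y z assume "x \<in> carrier (sdp K s)" "y \<in> carrier (sdp K s)" "z \<in> carrier (sdp K s)"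
  then show "x \<otimes>\<^bsub>sdp K s\<^esub> y \<otimes>\<^bsub>sdp K s\<^esub> z = x \<otimes>\<^bsub>sdp K s\<^esub> (y \<otimes>\<^bsub>sdp K s\<^esub> z)"
    by (cases x; cases y; cases z) (auto simp: s_mult m_assoc algebra_simps)
next
  fix x assume "x \<in> carrier (sdp K s)"
  then obtain m k where x: "x = (m, k)" "k \<in> carrier K" by auto
  show "\<exists>y\<in>carrier (sdp K s). y \<otimes>\<^bsub>sdp K s\<^esub> x = \<one>\<^bsub>sdp K s\<^esub>"
    by (rule bexI[of _ "(- s k * m, inv k)"]) (use x s_inv s_sq in \<open>auto simp: algebra_simps\<close>)
qed (auto simp: s_one)

lemma sdp_pow: "k \<in> carrier K \<Longrightarrow> snd ((m, k) [^]\<^bsub>sdp K s\<^esub> (n::nat)) = k [^] n"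
  by (induction n) (auto simp: sdp_def nat_pow_def)

lemma sdp_pow_one: "(m, \<one>) [^]\<^bsub>sdp K s\<^esub> (n::nat) = (int n * m, \<one>)"
  by (induction n) (auto simp: s_one algebra_simps)

lemma sdp_torsion_free: assumes "torsion_free K" shows "torsion_free (sdp K s)"
  unfolding torsion_free_def
proof (intro ballI allI impI)
  fix x and n :: nat assume x: "x \<in> carrier (sdp K s)" and h: "0 < n \<and> x [^]\<^bsub>sdp K s\<^esub> n = \<one>\<^bsub>sdp K s\<^esub>"
  obtain m k where mk: "x = (m, k)" "k \<in> carrier K" using x by auto
  have "k [^] n = \<one>" using sdp_pow[OF mk(2), of m n] h mk by simp
  then have k1: "k = \<one>" using assms mk h unfolding torsion_free_def by blast
  have "(int n * m, \<one>) = (0::int, \<one>)" using sdp_pow_one[of m n] h mk k1 by (simp del: mult_eq_0_iff)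
  then have "m = 0" using h by auto
  then show "x = \<one>\<^bsub>sdp K s\<^esub>" using mk k1 by auto
qed

lemma emb_hom: "(\<lambda>k. (0::int, k)) \<in> hom K (sdp K s)"
  by (auto simp: hom_def)

lemma sdp_generate:
  assumes S: "S \<subseteq> carrier K" "generate K S = carrier K"
  shows "generate (sdp K s) (insert (1, \<one>) ((\<lambda>k. (0::int, k)) ` S)) = carrier (sdp K s)"
    (is "generate ?G ?T = _")
proof
  have G: "group ?G" by (rule sdp_group)
  have T: "?T \<subseteq> carrier ?G" using S by auto
  show "generate ?G ?T \<subseteq> carrier ?G" by (rule group.generate_incl[OF G T])
  have sg: "subgroup (generate ?G ?T) ?G" by (rule group.generate_is_subgroup[OF G T])
  have gh: "group_hom K ?G (\<lambda>k. (0::int, k))"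
    by (simp add: group_hom_def group_hom_axioms_def G is_group emb_hom)
  have emb: "(0, k) \<in> generate ?G ?T" if "k \<in> carrier K" for k
  proof -
    have "(0, k) \<in> (\<lambda>k. (0::int, k)) ` generate K S" using that S by auto
    also have "\<dots> = generate ?G ((\<lambda>k. (0::int, k)) ` S)" using group_hom.generate_img[OF gh S(1)] by simp
    also have "\<dots> \<subseteq> generate ?G ?T" by (rule group.mono_generate[OF G]) auto
    finally show ?thesis .
  qed
  have pos: "(int n, \<one>) \<in> generate ?G ?T" for n
  proof (induction n)
    case 0 show ?case using emb[OF one_closed] by (metis of_nat_0)
  next
    case (Suc n)
    have "(1::int, \<one>) \<in> generate ?G ?T" by (rule generate.incl) simp
    then have "(int n, \<one>) \<otimes>\<^bsub>?G\<^esub> (1, \<one>) \<in> generate ?G ?T"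
      using Suc subgroup.m_closed[OF sg] by blast
    moreover have "(int n, \<one>) \<otimes>\<^bsub>?G\<^esub> (1, \<one>) = (int (Suc n), \<one>)"
      by (simp add: s_one add.commute)
    ultimately show ?case by metis
  qed
  have all: "(m, \<one>) \<in> generate ?G ?T" for m
  proof (cases "m \<ge> 0")
    case True then show ?thesis using pos[of "nat m"] by simp
  next
    case False
    have nm: "int (nat (-m)) = -m" using False by linarith
    have eq: "(m, \<one>) \<otimes>\<^bsub>?G\<^esub> (int (nat (-m)), \<one>) = \<one>\<^bsub>?G\<^esub>"
      unfolding nm by (simp add: s_one)
    have "inv\<^bsub>?G\<^esub> (int (nat (-m)), \<one>) = (m, \<one>)"
      by (rule group.inv_equality[OF G eq]) simp_all
    then show ?thesis using subgroup.m_inv_closed[OF sg pos[of "nat (-m)"]] by metis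
  qed
  show "carrier ?G \<subseteq> generate ?G ?T"
  proof
    fix x assume "x \<in> carrier ?G"
    then obtain m k where x: "x = (m, k)" "k \<in> carrier K" by auto
    have "(m, \<one>) \<otimes>\<^bsub>?G\<^esub> (0, k) \<in> generate ?G ?T"
      using subgroup.m_closed[OF sg all emb[OF x(2)]] .
    then show "x \<in> generate ?G ?T" using x by (simp add: s_one)
  qed
qed

end

lemma (in group) countable_generate:
  assumes "finite S" "S \<subseteq> carrier G"
  shows "countable (generate G S)"
proof -
  define F where "F = (\<lambda>l. foldr (\<otimes>) l \<one>)"
  have app: "F (l1 @ l2) = F l1 \<otimes> F l2" if "set l1 \<subseteq> carrier G" "set l2 \<subseteq> carrier G" for l1 l2
    using that(1)
  proof (induction l1)
    case Nil then show ?case using that(2) by (simp add: F_def)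
  next
    case (Cons a l1)
    have "F l2 \<in> carrier G" using that(2) unfolding F_def by (induction l2) auto
    moreover have "F l1 \<in> carrier G" using Cons.prems unfolding F_def by (induction l1) auto
    ultimately show ?case using Cons by (simp add: F_def m_assoc)
  qed
  have "generate G S \<subseteq> F ` lists (S \<union> (\<lambda>x. inv x) ` S)"
  proof
    fix h assume "h \<in> generate G S"
    then show "h \<in> F ` lists (S \<union> (\<lambda>x. inv x) ` S)"
    proof induction
      case one show ?case by (rule image_eqI[of _ _ "[]"]) (auto simp: F_def)
    next
      case (incl h) show ?case by (rule image_eqI[of _ _ "[h]"]) (use incl assms in \<open>auto simp: F_def\<close>)
    next
      case (inv h) show ?case by (rule image_eqI[of _ _ "[inv h]"]) (use inv assms in \<open>auto simp: F_def\<close>)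
    next
      case (eng h1 h2)
      then obtain l1 l2 where "l1 \<in> lists (S \<union> (\<lambda>x. inv x) ` S)" "h1 = F l1" "l2 \<in> lists (S \<union> (\<lambda>x. inv x) ` S)" "h2 = F l2"
        by auto
      moreover have "S \<union> (\<lambda>x. inv x) ` S \<subseteq> carrier G" using assms by auto
      ultimately have "set l1 \<subseteq> carrier G" "set l2 \<subseteq> carrier G"
        and l: "l1 @ l2 \<in> lists (S \<union> (\<lambda>x. inv x) ` S)" "h1 = F l1" "h2 = F l2" by auto
      then show ?case using app by (intro image_eqI[of _ _ "l1 @ l2"]) auto
    qed
  qed
  moreover have "countable (F ` lists (S \<union> (\<lambda>x. inv x) ` S))" 
    using assms(1) by (intro countable_image countable_lists countable_finite) auto
  ultimately show ?thesis by (rule countable_subset)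
qed



lemma (in group) conj_hom: "x \<in> carrier G \<Longrightarrow> (\<lambda>y. x \<otimes> y \<otimes> inv x) \<in> hom G G"
  unfolding hom_def
proof (intro CollectI conjI ballI)
  fix y z assume "x \<in> carrier G" "y \<in> carrier G" "z \<in> carrier G"
  then show "x \<otimes> (y \<otimes> z) \<otimes> inv x = x \<otimes> y \<otimes> inv x \<otimes> (x \<otimes> z \<otimes> inv x)"
    by (simp add: m_assoc flip: m_assoc[of "inv x" x])
qed auto

lemma (in group) normal_closure_normal:
  assumes "g \<in> carrier G" shows "normal_closure G {g} \<lhd> G"
proof -
  define C where "C = (\<Union>h \<in> carrier G. \<Union>s \<in> {g}. {h \<otimes> s \<otimes> inv h})"
  have N: "normal_closure G {g} = generate G C" unfolding normal_closure_def C_def ..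
  have CC: "C \<subseteq> carrier G" using assms unfolding C_def by auto
  show ?thesis unfolding normal_inv_iff N
  proof (intro conjI ballI)
    show "subgroup (generate G C) G" by (rule generate_is_subgroup[OF CC])
    fix x h assume x: "x \<in> carrier G" and h: "h \<in> generate G C"
    have gh: "group_hom G G (\<lambda>y. x \<otimes> y \<otimes> inv x)"
      by (simp add: group_hom_def group_hom_axioms_def is_group conj_hom[OF x])
    have "(\<lambda>y. x \<otimes> y \<otimes> inv x) ` C \<subseteq> C"
    proof
      fix c assume "c \<in> (\<lambda>y. x \<otimes> y \<otimes> inv x) ` C"
      then obtain k where k: "k \<in> carrier G" "c = x \<otimes> (k \<otimes> g \<otimes> inv k) \<otimes> inv x"
        unfolding C_def by auto
      have "c = (x \<otimes> k) \<otimes> g \<otimes> inv (x \<otimes> k)"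
        using k x assms by (simp add: m_assoc inv_mult_group)
      then show "c \<in> C" unfolding C_def using k x by auto
    qed
    then have "generate G ((\<lambda>y. x \<otimes> y \<otimes> inv x) ` C) \<subseteq> generate G C"
      by (rule mono_generate)
    then show "x \<otimes> h \<otimes> inv x \<in> generate G C"
      using group_hom.generate_img[OF gh CC] h by auto
  qed
qed


lemma (in group) sign_hom:
  assumes g: "g \<in> carrier G" and c: "c \<in> carrier G"
    and gen: "generate G {g, c} = carrier G"
    and nc: "\<And>n::int. n \<noteq> 0 \<Longrightarrow> c [^] n \<notin> normal_closure G {g}"
  shows "\<exists>s::'a \<Rightarrow> int. (\<forall>x\<in>carrier G. \<forall>y\<in>carrier G. s (x \<otimes> y) = s x * s y)
     \<and> (\<forall>x\<in>carrier G. s x = 1 \<or> s x = -1) \<and> s g = 1 \<and> s c = -1"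
proof -
  define N where "N = normal_closure G {g}"
  have nN: "N \<lhd> G" unfolding N_def by (rule normal_closure_normal[OF g])
  have sN: "subgroup N G" using nN normal_imp_subgroup by blast
  have conjN: "x \<otimes> h \<otimes> inv x \<in> N" if "x \<in> carrier G" "h \<in> N" for x h
    using nN that normal_inv_iff by blast
  have NC: "N \<subseteq> carrier G" using sN subgroup.subset by blast
  define P where "P k n \<longleftrightarrow> (\<exists>y\<in>N. k = c [^] (n::int) \<otimes> y)" for k n
  have Pmult: "P (k \<otimes> k') (n + m)" if hP: "P k n" "P k' m" for k k' n m
  proof -
    obtain y y' where y: "y \<in> N" "k = c [^] n \<otimes> y" "y' \<in> N" "k' = c [^] m \<otimes> y'"
      using hP unfolding P_def by blast
    have yc: "y \<in> carrier G" "y' \<in> carrier G" using y NC by auto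
    have cm: "c [^] m \<in> carrier G" "c [^] n \<in> carrier G" using c by auto
    have z: "inv (c [^] m) \<otimes> y \<otimes> inv (inv (c [^] m)) \<in> N"
      using conjN[OF inv_closed[OF cm(1)] y(1)] .
    have "k \<otimes> k' = c [^] (n + m) \<otimes> ((inv (c [^] m) \<otimes> y \<otimes> inv (inv (c [^] m))) \<otimes> y')"
      using y yc cm c by (simp add: int_pow_mult m_assoc flip: m_assoc[of "c [^] m" "inv (c [^] m)"])
    moreover have "(inv (c [^] m) \<otimes> y \<otimes> inv (inv (c [^] m))) \<otimes> y' \<in> N"
      using z y(3) subgroup.m_closed[OF sN] by blast
    ultimately show ?thesis unfolding P_def by blast
  qed
  have Pinv: "P (inv k) (- n)" if hP: "P k n" for k n
  proof -
    obtain y where y: "y \<in> N" "k = c [^] n \<otimes> y" using hP unfolding P_def by blast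
    have yc: "y \<in> carrier G" using y NC by auto
    have cm: "c [^] n \<in> carrier G" using c by auto
    have z: "c [^] n \<otimes> inv y \<otimes> inv (c [^] n) \<in> N"
      using conjN[OF cm subgroup.m_inv_closed[OF sN y(1)]] .
    have "inv k = c [^] (- n) \<otimes> (c [^] n \<otimes> inv y \<otimes> inv (c [^] n))"
      using y yc cm c by (simp add: int_pow_neg m_assoc inv_mult_group flip: m_assoc[of "inv (c [^] n)" "c [^] n"])
    with z show ?thesis unfolding P_def by blast
  qed
  have gN: "g \<in> N"
  proof -
    have "g = \<one> \<otimes> g \<otimes> inv \<one>" using g by simp
    then have "g \<in> (\<Union>h \<in> carrier G. \<Union>s \<in> {g}. {h \<otimes> s \<otimes> inv h})" by blast
    then show ?thesis unfolding N_def normal_closure_def by (rule generate.incl)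
  qed
  have Pg: "P g 0" unfolding P_def using gN g by force
  have Pc: "P c 1" unfolding P_def using c subgroup.one_closed[OF sN] by force
  define H where "H = {k \<in> carrier G. \<exists>n. P k n}"
  have sH: "subgroup H G"
  proof (rule subgroupI)
    show "H \<subseteq> carrier G" unfolding H_def by auto
    show "H \<noteq> {}" using Pg g unfolding H_def by blast
    show "inv a \<in> H" if "a \<in> H" for a using that Pinv unfolding H_def by auto
    show "a \<otimes> b \<in> H" if "a \<in> H" "b \<in> H" for a b using that Pmult unfolding H_def by blast
  qed
  have allP: "\<exists>n. P k n" if "k \<in> carrier G" for k
  proof -
    have "generate G {g, c} \<subseteq> H" using Pg Pc g c by (intro generate_subgroup_incl[OF _ sH]) (auto simp: H_def)
    then show ?thesis using that gen unfolding H_def by auto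
  qed
  have uniq: "n = m" if hP: "P k n" "P k m" for k n m
  proof -
    obtain y y' where y: "y \<in> N" "k = c [^] n \<otimes> y" "y' \<in> N" "k = c [^] m \<otimes> y'"
      using hP unfolding P_def by blast
    have yc: "y \<in> carrier G" "y' \<in> carrier G" using y NC by auto
    have cm: "c [^] m \<in> carrier G" "c [^] n \<in> carrier G" using c by auto
    have "c [^] (- m + n) = y' \<otimes> inv y"
    proof -
      have "c [^] (- m + n) = inv (c [^] m) \<otimes> c [^] n" by (metis int_pow_mult[OF c] int_pow_neg[OF c])
      also have "\<dots> = inv (c [^] m) \<otimes> (c [^] n \<otimes> y) \<otimes> inv y" using yc cm by (simp add: m_assoc)
      also have "\<dots> = inv (c [^] m) \<otimes> (c [^] m \<otimes> y') \<otimes> inv y" using y by simp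
      also have "\<dots> = y' \<otimes> inv y" using yc cm by (simp flip: m_assoc)
      finally show ?thesis .
    qed
    moreover have "y' \<otimes> inv y \<in> N" using y subgroup.m_closed[OF sN] subgroup.m_inv_closed[OF sN] by blast
    ultimately have "- m + n = 0" using nc N_def by metis
    then show ?thesis by simp
  qed
  define p where "p k = (THE n. P k n)" for k
  have pP: "p k = n" if "P k n" for k n
    unfolding p_def using that uniq by blast
  define s where "s k = (if even (p k) then 1 else -1 :: int)" for k
  have "s (x \<otimes> y) = s x * s y" if hx: "x \<in> carrier G" "y \<in> carrier G" for x y
  proof -
    obtain n m where "P x n" "P y m" using allP hx by blast
    then have "p (x \<otimes> y) = p x + p y" using Pmult pP by metis
    then show ?thesis unfolding s_def by auto
  qed
  moreover have "s g = 1" using pP[OF Pg] unfolding s_def by simp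
  moreover have "s c = -1" using pP[OF Pc] unfolding s_def by simp
  moreover have "\<forall>x\<in>carrier G. s x = 1 \<or> s x = -1" unfolding s_def by auto
  ultimately show ?thesis by blast
qed



lemma iso_torsion_free:
  assumes G: "group G" and H: "group H" and f: "f \<in> iso G H" and tf: "torsion_free G"
  shows "torsion_free H"
  unfolding torsion_free_def
proof (intro ballI allI impI)
  fix x and n :: nat assume x: "x \<in> carrier H" and h: "0 < n \<and> x [^]\<^bsub>H\<^esub> n = \<one>\<^bsub>H\<^esub>"
  have fh: "f \<in> hom G H" and bij: "bij_betw f (carrier G) (carrier H)" using f by (auto simp: iso_def)
  obtain y where y: "y \<in> carrier G" "x = f y" using x bij by (auto simp: bij_betw_def)
  have "f (y [^]\<^bsub>G\<^esub> n) = f \<one>\<^bsub>G\<^esub>"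
    using hom_nat_pow[OF fh y(1) G H] h y hom_one[OF fh G H] by simp
  then have "y [^]\<^bsub>G\<^esub> n = \<one>\<^bsub>G\<^esub>"
    using bij y G by (auto simp: bij_betw_def inj_on_def intro: monoid.nat_pow_closed group.is_monoid monoid.one_closed)
  then have "y = \<one>\<^bsub>G\<^esub>" using tf y h unfolding torsion_free_def by blast
  then show "x = \<one>\<^bsub>H\<^esub>" using y hom_one[OF fh G H] by simp
qed

lemma iso_fg:
  assumes G: "group G" and H: "group H" and f: "f \<in> iso G H" and fg: "finitely_generated G"
  shows "finitely_generated H"
proof -
  obtain S where S: "finite S" "S \<subseteq> carrier G" "generate G S = carrier G"
    using fg unfolding finitely_generated_def by blast
  have fh: "f \<in> hom G H" and bij: "bij_betw f (carrier G) (carrier H)" using f by (auto simp: iso_def)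
  have gh: "group_hom G H f" by (simp add: group_hom_def group_hom_axioms_def G H fh)
  have "generate H (f ` S) = f ` carrier G" using group_hom.generate_img[OF gh S(2)] S(3) by simp
  also have "\<dots> = carrier H" using bij by (simp add: bij_betw_def)
  finally show ?thesis unfolding finitely_generated_def using S bij
    by (intro exI[of _ "f ` S"]) (auto simp: bij_betw_def dest!: subsetD[OF S(2)])
qed

lemma hom_commutator:
  assumes G: "group G" and H: "group H" and f: "f \<in> hom G H" and x: "x \<in> carrier G" and y: "y \<in> carrier G"
  shows "f (commutator G x y) = commutator H (f x) (f y)"
proof -
  have gh: "group_hom G H f" by (simp add: group_hom_def group_hom_axioms_def G H f)
  show ?thesis unfolding commutator_def
    using x y group_hom.hom_mult[OF gh] group_hom.hom_inv[OF gh] group.inv_closed[OF G]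
      monoid.m_closed[OF group.is_monoid[OF G]]
    by simp
qed

context sdp_ctx begin

lemma sdp_inv: "k \<in> carrier K \<Longrightarrow> inv\<^bsub>sdp K s\<^esub> (m, k) = (- s k * m, inv k)"
  by (rule group.inv_equality[OF sdp_group]) (auto simp: s_inv s_sq algebra_simps)

end



theorem lemma3p2:
  fixes K :: "('a, 'b) monoid_scheme" and g \<gamma> :: 'a
  assumes "group K"
    and "g \<in> carrier K" and "\<gamma> \<in> carrier K"
    and "generate K {g, \<gamma>} = carrier K"
    and "carrier K \<noteq> {\<one>\<^bsub>K\<^esub>}"
    and "torsion_free K"
    and "\<And>n::int. n \<noteq> 0 \<Longrightarrow> \<gamma> [^]\<^bsub>K\<^esub> n \<notin> normal_closure K {g}"
  shows "\<exists>(\<Gamma> :: nat monoid) (\<phi> :: 'a \<Rightarrow> nat) a.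
           group \<Gamma> \<and> finitely_generated \<Gamma> \<and> torsion_free \<Gamma> \<and>
           \<phi> \<in> hom K \<Gamma> \<and> inj_on \<phi> (carrier K) \<and>
           a \<in> carrier \<Gamma> \<and> a \<noteq> \<one>\<^bsub>\<Gamma>\<^esub> \<and>
           commutator \<Gamma> a (\<phi> \<gamma>) \<noteq> \<one>\<^bsub>\<Gamma>\<^esub> \<and>
           commutator \<Gamma> a (\<phi> \<gamma>) \<otimes>\<^bsub>\<Gamma>\<^esub> \<phi> g = \<phi> g \<otimes>\<^bsub>\<Gamma>\<^esub> commutator \<Gamma> a (\<phi> \<gamma>) \<and>
           commutator \<Gamma> a (\<phi> g) = \<one>\<^bsub>\<Gamma>\<^esub>"
proof -
  note K = assms(1) and g = assms(2) and c = assms(3)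
  have "\<exists>s::'a \<Rightarrow> int. (\<forall>x\<in>carrier K. \<forall>y\<in>carrier K. s (x \<otimes>\<^bsub>K\<^esub> y) = s x * s y)
     \<and> (\<forall>x\<in>carrier K. s x = 1 \<or> s x = -1) \<and> s g = 1 \<and> s \<gamma> = -1"
    apply (rule group.sign_hom[OF K g c assms(4)])
    using assms(7) by blast
  then obtain s :: "'a \<Rightarrow> int" where s: "\<forall>x\<in>carrier K. \<forall>y\<in>carrier K. s (x \<otimes>\<^bsub>K\<^esub> y) = s x * s y"
      "\<forall>x\<in>carrier K. s x = 1 \<or> s x = -1" "s g = 1" "s \<gamma> = -1"
    by blast
  interpret sd: sdp_ctx K s
    by (rule sdp_ctx.intro[OF K]) (unfold_locales, use s in auto)
  define G0 where "G0 = sdp K s"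
  have G0: "group G0" unfolding G0_def by (rule sd.sdp_group)
  have cK: "countable (carrier K)"
    using group.countable_generate[OF K, of "{g, \<gamma>}"] assms(4) g c by simp
  have cG0: "countable (carrier G0)" unfolding G0_def using cK by simp
  define f where "f = to_nat_on (carrier G0)"
  have inj: "inj_on f (carrier G0)" unfolding f_def using cG0 by (rule inj_on_to_nat_on)
  define \<Gamma> where "\<Gamma> = image_group f G0"
  have \<Gamma>: "group \<Gamma>" unfolding \<Gamma>_def by (rule group.inj_imp_image_group_is_group[OF G0 inj])
  have fiso: "f \<in> iso G0 \<Gamma>" unfolding \<Gamma>_def by (rule inj_imp_image_group_iso[OF inj])
  have fhom: "f \<in> hom G0 \<Gamma>" using fiso by (simp add: iso_def)
  have fmul: "f (x \<otimes>\<^bsub>G0\<^esub> y) = f x \<otimes>\<^bsub>\<Gamma>\<^esub> f y" if "x \<in> carrier G0" "y \<in> carrier G0" for x y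
    using hom_mult[OF fhom that] .
  have fone: "f \<one>\<^bsub>G0\<^esub> = \<one>\<^bsub>\<Gamma>\<^esub>" using hom_one[OF fhom G0 \<Gamma>] .
  have fcar: "f x \<in> carrier \<Gamma>" if "x \<in> carrier G0" for x
    using fhom that by (auto simp: hom_def)
  have fg0: "finitely_generated G0"
    unfolding finitely_generated_def
    by (rule exI[of _ "insert (1, \<one>\<^bsub>K\<^esub>) ((\<lambda>k. (0::int, k)) ` {g, \<gamma>})"])
       (use g c sd.sdp_generate[OF _ assms(4)] in \<open>auto simp: G0_def\<close>)
  define \<phi> where "\<phi> k = f (0::int, k)" for k
  define a where "a = f (1::int, \<one>\<^bsub>K\<^esub>)"
  have phom: "\<phi> \<in> hom K \<Gamma>"
    unfolding hom_def
  proof (intro CollectI conjI ballI)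
    show "\<phi> \<in> carrier K \<rightarrow> carrier \<Gamma>" unfolding \<phi>_def using fcar by (auto simp: G0_def)
    fix x y assume "x \<in> carrier K" "y \<in> carrier K"
    then show "\<phi> (x \<otimes>\<^bsub>K\<^esub> y) = \<phi> x \<otimes>\<^bsub>\<Gamma>\<^esub> \<phi> y"
      unfolding \<phi>_def using fmul[of "(0, x)" "(0, y)"] by (simp add: G0_def)
  qed
  have pinj: "inj_on \<phi> (carrier K)"
    using inj unfolding \<phi>_def inj_on_def by (auto simp: G0_def)
  have comm: "commutator \<Gamma> (f x) (f y) = f (commutator G0 x y)" if "x \<in> carrier G0" "y \<in> carrier G0" for x y
    using hom_commutator[OF G0 \<Gamma> fhom that] by simp
  have cinv: "inv\<^bsub>K\<^esub> \<gamma> \<in> carrier K" "inv\<^bsub>K\<^esub> g \<in> carrier K" using g c group.inv_closed[OF K] by auto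
  have sinv: "s (inv\<^bsub>K\<^esub> \<gamma>) = -1" "s (inv\<^bsub>K\<^esub> g) = 1" using sd.s_inv g c s by auto
  have c1: "commutator G0 (1, \<one>\<^bsub>K\<^esub>) (0, \<gamma>) = (-2, \<one>\<^bsub>K\<^esub>)"
    unfolding commutator_def G0_def using c cinv sinv
    by (simp add: sd.sdp_inv sd.s_one group.r_inv[OF K] group.l_inv[OF K])
  have c2: "commutator G0 (1, \<one>\<^bsub>K\<^esub>) (0, g) = (0, \<one>\<^bsub>K\<^esub>)"
    unfolding commutator_def G0_def using g cinv sinv
    by (simp add: sd.sdp_inv sd.s_one group.r_inv[OF K] group.l_inv[OF K])
  have car: "(x, k) \<in> carrier G0" if "k \<in> carrier K" for x k using that by (simp add: G0_def)
  have one1: "\<one>\<^bsub>K\<^esub> \<in> carrier K" using group.is_monoid[OF K] monoid.one_closed by blast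
  have G0one: "\<one>\<^bsub>G0\<^esub> = (0, \<one>\<^bsub>K\<^esub>)" by (simp add: G0_def)
  have neq: "f (x, k) \<noteq> \<one>\<^bsub>\<Gamma>\<^esub>" if "k \<in> carrier K" "x \<noteq> 0" for x k
  proof
    assume "f (x, k) = \<one>\<^bsub>\<Gamma>\<^esub>"
    then have "f (x, k) = f (0, \<one>\<^bsub>K\<^esub>)" using fone G0one by simp
    then have "(x, k) = (0, \<one>\<^bsub>K\<^esub>)" using inj car[OF that(1)] car[OF one1] unfolding inj_on_def by blast
    then show False using that by simp
  qed
  have ca: "commutator \<Gamma> a (\<phi> \<gamma>) = f (-2, \<one>\<^bsub>K\<^esub>)"
    unfolding a_def \<phi>_def using comm[OF car[OF one1] car[OF c]] c1 by simp
  have cb: "commutator \<Gamma> a (\<phi> g) = \<one>\<^bsub>\<Gamma>\<^esub>"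
    unfolding a_def \<phi>_def using comm[OF car[OF one1] car[OF g]] c2 fone G0one by simp
  have cc: "f (-2, \<one>\<^bsub>K\<^esub>) \<otimes>\<^bsub>\<Gamma>\<^esub> \<phi> g = \<phi> g \<otimes>\<^bsub>\<Gamma>\<^esub> f (-2, \<one>\<^bsub>K\<^esub>)"
  proof -
    have "f (-2, \<one>\<^bsub>K\<^esub>) \<otimes>\<^bsub>\<Gamma>\<^esub> \<phi> g = f ((-2, \<one>\<^bsub>K\<^esub>) \<otimes>\<^bsub>G0\<^esub> (0, g))"
      unfolding \<phi>_def using fmul car one1 g by simp
    also have "\<dots> = f ((0, g) \<otimes>\<^bsub>G0\<^esub> (-2, \<one>\<^bsub>K\<^esub>))"
      using g s(3) by (simp add: G0_def sd.s_one group.is_monoid[OF K])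
    also have "\<dots> = \<phi> g \<otimes>\<^bsub>\<Gamma>\<^esub> f (-2, \<one>\<^bsub>K\<^esub>)"
      unfolding \<phi>_def using fmul car one1 g by simp
    finally show ?thesis .
  qed
  have tf0: "torsion_free G0" unfolding G0_def by (rule sd.sdp_torsion_free[OF assms(6)])
  show ?thesis
    apply (rule exI[of _ \<Gamma>], rule exI[of _ \<phi>], rule exI[of _ a])
    using \<Gamma> iso_fg[OF G0 \<Gamma> fiso fg0] iso_torsion_free[OF G0 \<Gamma> fiso tf0]
      phom pinj fcar[OF car[OF one1]] neq[OF one1] ca cb cc one1
    unfolding a_def by simp
qed


end
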